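(* An $L$-layer RNN with $H$ heads, hidden dimension $m$ and precision $p$ cannot solve the function evaluation task $\mathsf{Eva}$ on $[n]$ whenever $LHmp<n\log n$. The same holds for RNNs with chain-of-thought.
   Context: Function evaluation $\mathsf{Eva}(f,x)$: the input is a function $f:[n]\to[n]$, given as $n$ tokens encoding $f(1),\dots,f(n)$, followed by one token encoding $x\in[n]$. The required output is $f(x)$. RNN layer (one head) with hidden dimension $m$ and precision $p$: given inputs $x_1,x_2,\dots$, one fixes $\mathrm{h}_0\in\mathbb{R}^m$ and computes $\mathrm{h}_i=g_{(i)}(x_i,\mathrm{h}_{i-1})\in\mathbb{R}^m$ and $y_i=f_{(i)}(x_i,\mathrm{h}_i)$ for arbitrary functions $g_{(i)},f_{(i)}$. The hidden states are represented with $p$-bit numbers. An $L$-layer RNN with $H$ heads has $L$ layers, each consisting of $H$ such heads in parallel with concatenated outputs, interleaved with arbitrary position-wise maps. With chain-of-thought, the model, after reading the input, autoregressively generates additional tokens (each appended as a new input position), and the answer is read from the generated tokens. *)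

theory Defs
  imports Complex_Main
begin

text \<open>Hidden states are real lists; validity (length m, entries among
  the p-bit representable numbers) is imposed by rnn_head_wf.
  head_trans i x h computes h_i from x_i and h_(i-1); head_out i x h computes y_i
  from x_i and h_i (positions are 1-based).\<close>
record 'v rnn_head =
  head_init  :: "real list"
  head_trans :: "nat \<Rightarrow> 'v \<Rightarrow> real list \<Rightarrow> real list"
  head_out   :: "nat \<Rightarrow> 'v \<Rightarrow> real list \<Rightarrow> 'v"

text \<open>A model: token embedding (position-wise map), a list of layers, each being a list of
  parallel heads followed by a position-wise map of the concatenated head outputs, and a
  final position-wise read-out to output tokens.\<close>
record 'v rnn_model =
  rnn_embed   :: "nat \<Rightarrow> 'v"
  rnn_layers  :: "('v rnn_head list \<times> ('v list \<Rightarrow> 'v)) list"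
  rnn_readout :: "'v \<Rightarrow> nat"

definition valid_state :: "nat \<Rightarrow> real set \<Rightarrow> real list \<Rightarrow> bool" where
  "valid_state m P h \<longleftrightarrow> length h = m \<and> set h \<subseteq> P"

definition rnn_head_wf :: "nat \<Rightarrow> real set \<Rightarrow> 'v rnn_head \<Rightarrow> bool" where
  "rnn_head_wf m P hh \<longleftrightarrow> valid_state m P (head_init hh) \<and>
     (\<forall>i x h. valid_state m P h \<longrightarrow> valid_state m P (head_trans hh i x h))"

definition rnn_wf :: "nat \<Rightarrow> nat \<Rightarrow> nat \<Rightarrow> real set \<Rightarrow> 'v rnn_model \<Rightarrow> bool" where
  "rnn_wf L H m P M \<longleftrightarrow> length (rnn_layers M) = L \<and>
     (\<forall>ly \<in> set (rnn_layers M). length (fst ly) = H \<and> (\<forall>hh \<in> set (fst ly). rnn_head_wf m P hh))"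

fun head_state :: "'v rnn_head \<Rightarrow> 'v list \<Rightarrow> nat \<Rightarrow> real list" where
  "head_state hh xs 0 = head_init hh"
| "head_state hh xs (Suc i) = head_trans hh (Suc i) (xs ! i) (head_state hh xs i)"

definition head_run :: "'v rnn_head \<Rightarrow> 'v list \<Rightarrow> 'v list" where
  "head_run hh xs = map (\<lambda>i. head_out hh i (xs ! (i - 1)) (head_state hh xs i)) [1..<length xs + 1]"

definition layer_run :: "'v rnn_head list \<times> ('v list \<Rightarrow> 'v) \<Rightarrow> 'v list \<Rightarrow> 'v list" where
  "layer_run ly xs = map (\<lambda>i. snd ly (map (\<lambda>hh. head_run hh xs ! i) (fst ly))) [0..<length xs]"

definition rnn_run :: "'v rnn_model \<Rightarrow> nat list \<Rightarrow> nat list" where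
  "rnn_run M toks = map (rnn_readout M)
     (fold layer_run (rnn_layers M) (map (rnn_embed M) toks))"

fun cot_extend :: "'v rnn_model \<Rightarrow> nat list \<Rightarrow> nat \<Rightarrow> nat list" where
  "cot_extend M toks 0 = toks"
| "cot_extend M toks (Suc k) = (let s = cot_extend M toks k in s @ [last (rnn_run M s)])"

definition cot_answer :: "'v rnn_model \<Rightarrow> nat \<Rightarrow> nat list \<Rightarrow> nat" where
  "cot_answer M T toks = last (rnn_run M (cot_extend M toks T))"

definition eva_input :: "nat \<Rightarrow> (nat \<Rightarrow> nat) \<Rightarrow> nat \<Rightarrow> nat list" where
  "eva_input n f x = map f [1..<n+1] @ [x]"

definition solves_eva :: "'v rnn_model \<Rightarrow> nat \<Rightarrow> nat \<Rightarrow> bool" where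
  "solves_eva M T n \<longleftrightarrow> (\<forall>f x. (\<forall>i\<in>{1..n}. f i \<in> {1..n}) \<longrightarrow> x \<in> {1..n} \<longrightarrow>
      cot_answer M T (eva_input n f x) = f x)"

end

theory Submission
  imports Defs
begin

lemma hs_take:
  assumes "take k xs = take k ys" "i \<le> k"
  shows "head_state hh xs i = head_state hh ys i"
  using assms(2)
proof (induction i)
  case 0 then show ?case by simp
next
  case (Suc i)
  have "xs ! i = take k xs ! i" using Suc.prems by simp
  also have "\<dots> = ys ! i" using assms(1) Suc.prems by simp
  finally show ?case using Suc by simp
qed

lemma hs_drop:
  assumes "length xs = length ys" "drop k xs = drop k ys"
    "head_state hh xs k = head_state hh ys k" "k \<le> i" "i \<le> length xs"
  shows "head_state hh xs i = head_state hh ys i"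
  using assms(4,5)
proof (induction i rule: dec_induct)
  case base then show ?case using assms(3) by simp
next
  case (step i)
  have kl: "k \<le> length xs" using step by simp
  have "xs ! i = drop k xs ! (i - k)" using step kl by simp
  also have "\<dots> = ys ! i" using assms(1,2) step kl by (metis nth_drop le_add_diff_inverse)
  finally show ?case using step by simp
qed

lemma head_run_nth:
  "i < length xs \<Longrightarrow> head_run hh xs ! i = head_out hh (Suc i) (xs ! i) (head_state hh xs (Suc i))"
  by (simp add: head_run_def nth_append del: upt_Suc)

lemma layer_run_length[simp]: "length (layer_run ly xs) = length xs"
  by (simp add: layer_run_def)

lemma layer_run_nth:
  "i < length xs \<Longrightarrow> layer_run ly xs ! i = snd ly (map (\<lambda>hh. head_run hh xs ! i) (fst ly))"
  by (simp add: layer_run_def)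

lemma layer_take:
  assumes "take k xs = take k ys"
  shows "take k (layer_run ly xs) = take k (layer_run ly ys)"
proof (cases "length xs < k")
  case True
  have h: "take k ys = xs" using assms True by simp
  have "length ys < k"
  proof (rule ccontr)
    assume "\<not> length ys < k"
    then have "length (take k ys) = k" by simp
    with h True show False by simp
  qed
  then have "xs = ys" using h by simp
  then show ?thesis by simp
next
  case False
  have "length (take k xs) = k" using False by simp
  then have "length (take k ys) = k" using assms by simp
  then have ly: "k \<le> length ys" by simp
  show ?thesis
  proof (rule nth_equalityI)
    show "length (take k (layer_run ly xs)) = length (take k (layer_run ly ys))"
      using False ly by simp
    fix i assume "i < length (take k (layer_run ly xs))"
    then have i: "i < k" "i < length xs" "i < length ys" using False ly by auto
    have e: "xs ! i = ys ! i" using assms i by (metis nth_take)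
    have s: "head_state hh xs (Suc i) = head_state hh ys (Suc i)" for hh
      by (rule hs_take[OF assms]) (use i in simp)
    show "take k (layer_run ly xs) ! i = take k (layer_run ly ys) ! i"
      using i e s by (simp add: layer_run_nth head_run_nth del: head_state.simps)
  qed
qed

lemma layer_drop:
  assumes "length xs = length ys" "drop k xs = drop k ys" "k \<le> length xs"
    "\<forall>hh\<in>set (fst ly). head_state hh xs k = head_state hh ys k"
  shows "drop k (layer_run ly xs) = drop k (layer_run ly ys)"
proof (rule nth_equalityI)
  show "length (drop k (layer_run ly xs)) = length (drop k (layer_run ly ys))"
    using assms by simp
  fix j assume "j < length (drop k (layer_run ly xs))"
  then have j: "k + j < length xs" by simp
  have kly: "k \<le> length ys" using assms by simp
  have e: "xs ! (k + j) = ys ! (k + j)"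
  proof -
    have "xs ! (k + j) = drop k xs ! j" using nth_drop[OF assms(3), symmetric] .
    also have "\<dots> = drop k ys ! j" using assms(2) by simp
    also have "\<dots> = ys ! (k + j)" using nth_drop[OF kly] .
    finally show ?thesis .
  qed
  have s: "hh \<in> set (fst ly) \<Longrightarrow> head_state hh xs (Suc (k + j)) = head_state hh ys (Suc (k + j))" for hh
    using hs_drop[OF assms(1,2), of hh "Suc (k+j)"] assms(4) j by (simp del: head_state.simps)
  have eq: "map (\<lambda>hh. head_run hh xs ! (k + j)) (fst ly) = map (\<lambda>hh. head_run hh ys ! (k + j)) (fst ly)"
    using s e j assms(1) by (simp add: head_run_nth del: head_state.simps)
  have "drop k (layer_run ly xs) ! j = snd ly (map (\<lambda>hh. head_run hh xs ! (k + j)) (fst ly))"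
    using j assms by (simp add: layer_run_nth)
  also have "\<dots> = snd ly (map (\<lambda>hh. head_run hh ys ! (k + j)) (fst ly))"
    using eq by (rule arg_cong)
  also have "\<dots> = drop k (layer_run ly ys) ! j"
    using j assms by (simp add: layer_run_nth)
  finally show "drop k (layer_run ly xs) ! j = drop k (layer_run ly ys) ! j" .
qed

fun sigs :: "('v rnn_head list \<times> ('v list \<Rightarrow> 'v)) list \<Rightarrow> 'v list \<Rightarrow> nat \<Rightarrow> real list list list" where
  "sigs [] us k = []"
| "sigs (ly # ls) us k = map (\<lambda>hh. head_state hh us k) (fst ly) # sigs ls (layer_run ly us) k"

lemma sigs_take: "take k us = take k vs \<Longrightarrow> sigs ls us k = sigs ls vs k"
proof (induction ls arbitrary: us vs)
  case Nil then show ?case by simp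
next
  case (Cons ly ls)
  have t: "take k (layer_run ly us) = take k (layer_run ly vs)" by (rule layer_take[OF Cons.prems])
  have r: "sigs ls (layer_run ly us) k = sigs ls (layer_run ly vs) k" by (rule Cons.IH[OF t])
  have h: "map (\<lambda>hh. head_state hh us k) (fst ly) = map (\<lambda>hh. head_state hh vs k) (fst ly)"
    using hs_take[OF Cons.prems, of k] by simp
  show ?case using r h by (simp only: sigs.simps)
qed

lemma fold_length[simp]: "length (fold layer_run ls us) = length us"
  by (induction ls arbitrary: us) auto

lemma sigs_drop:
  "length us = length vs \<Longrightarrow> k \<le> length us \<Longrightarrow> drop k us = drop k vs \<Longrightarrow> sigs ls us k = sigs ls vs k
   \<Longrightarrow> drop k (fold layer_run ls us) = drop k (fold layer_run ls vs)"
proof (induction ls arbitrary: us vs)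
  case Nil then show ?case by simp
next
  case (Cons ly ls)
  have st: "\<forall>hh\<in>set (fst ly). head_state hh us k = head_state hh vs k"
    using Cons.prems(4) by (simp add: map_eq_conv)
  have "drop k (layer_run ly us) = drop k (layer_run ly vs)"
    using layer_drop[OF Cons.prems(1,3,2) st] .
  then show ?case using Cons by simp
qed

lemma hs_valid: "rnn_head_wf m P hh \<Longrightarrow> valid_state m P (head_state hh xs i)"
  by (induction i) (auto simp: rnn_head_wf_def)

lemma sigs_in:
  assumes "\<forall>ly\<in>set ls. length (fst ly) = H \<and> (\<forall>hh\<in>set (fst ly). rnn_head_wf m P hh)"
  shows "sigs ls us k \<in> {ss. set ss \<subseteq> {hs. set hs \<subseteq> {h. set h \<subseteq> P \<and> length h = m} \<and> length hs = H} \<and> length ss = length ls}"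
  using assms
proof (induction ls arbitrary: us)
  case Nil then show ?case by simp
next
  case (Cons ly ls)
  have v: "head_state hh us k \<in> {h. set h \<subseteq> P \<and> length h = m}" if "hh \<in> set (fst ly)" for hh
  proof -
    have "rnn_head_wf m P hh" using Cons.prems that by auto
    then have "valid_state m P (head_state hh us k)" by (rule hs_valid)
    then show ?thesis by (simp add: valid_state_def)
  qed
  have hd: "map (\<lambda>hh. head_state hh us k) (fst ly) \<in> {hs. set hs \<subseteq> {h. set h \<subseteq> P \<and> length h = m} \<and> length hs = H}"
    using Cons.prems by (auto dest!: v)
  have tl: "sigs ls (layer_run ly us) k \<in> {ss. set ss \<subseteq> {hs. set hs \<subseteq> {h. set h \<subseteq> P \<and> length h = m} \<and> length hs = H} \<and> length ss = length ls}"
    using Cons.IH Cons.prems by simp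
  show ?case using hd tl by simp
qed

lemma run_last:
  assumes "length s1 = length s2" "n < length s1" "drop n s1 = drop n s2"
    "sigs (rnn_layers M) (map (rnn_embed M) (take n s1)) n = sigs (rnn_layers M) (map (rnn_embed M) (take n s2)) n"
  shows "last (rnn_run M s1) = last (rnn_run M s2)"
proof -
  let ?u1 = "map (rnn_embed M) s1" and ?u2 = "map (rnn_embed M) s2"
  have "sigs (rnn_layers M) ?u1 n = sigs (rnn_layers M) (map (rnn_embed M) (take n s1)) n"
    by (rule sigs_take) (simp add: take_map)
  moreover have "sigs (rnn_layers M) ?u2 n = sigs (rnn_layers M) (map (rnn_embed M) (take n s2)) n"
    by (rule sigs_take) (simp add: take_map)
  ultimately have sg: "sigs (rnn_layers M) ?u1 n = sigs (rnn_layers M) ?u2 n" using assms(4) by simp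
  have d: "drop n (fold layer_run (rnn_layers M) ?u1) = drop n (fold layer_run (rnn_layers M) ?u2)"
    by (rule sigs_drop) (use assms sg in \<open>auto simp: drop_map\<close>)
  have "last (rnn_run M s1) = last (drop n (rnn_run M s1))" using assms by (simp add: rnn_run_def)
  also have "\<dots> = last (drop n (rnn_run M s2))" using d by (simp add: rnn_run_def drop_map)
  also have "\<dots> = last (rnn_run M s2)" using assms by (simp add: rnn_run_def)
  finally show ?thesis .
qed

lemma cot_same:
  assumes "length F1 = n" "length F2 = n"
    "sigs (rnn_layers M) (map (rnn_embed M) F1) n = sigs (rnn_layers M) (map (rnn_embed M) F2) n"
  shows "length (cot_extend M (F1 @ [x]) T) = n + 1 + T \<and> length (cot_extend M (F2 @ [x]) T) = n + 1 + T
    \<and> drop n (cot_extend M (F1 @ [x]) T) = drop n (cot_extend M (F2 @ [x]) T)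
    \<and> take n (cot_extend M (F1 @ [x]) T) = F1 \<and> take n (cot_extend M (F2 @ [x]) T) = F2"
proof (induction T)
  case 0 then show ?case using assms by simp
next
  case (Suc T)
  let ?s1 = "cot_extend M (F1 @ [x]) T" and ?s2 = "cot_extend M (F2 @ [x]) T"
  have t1: "take n ?s1 = F1" and t2: "take n ?s2 = F2" using Suc.IH by auto
  have "last (rnn_run M ?s1) = last (rnn_run M ?s2)"
  proof (rule run_last)
    show "length ?s1 = length ?s2" using Suc.IH by simp
    show "n < length ?s1" using Suc.IH by simp
    show "drop n ?s1 = drop n ?s2" using Suc.IH by simp
    show "sigs (rnn_layers M) (map (rnn_embed M) (take n ?s1)) n = sigs (rnn_layers M) (map (rnn_embed M) (take n ?s2)) n"
      unfolding t1 t2 by (rule assms(3))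
  qed
  then obtain a where a1: "last (rnn_run M ?s1) = a" and a2: "last (rnn_run M ?s2) = a" by blast
  have e1: "cot_extend M (F1 @ [x]) (Suc T) = ?s1 @ [a]" using a1 by (simp add: Let_def)
  have e2: "cot_extend M (F2 @ [x]) (Suc T) = ?s2 @ [a]" using a2 by (simp add: Let_def)
  have l: "n \<le> length ?s1" "n \<le> length ?s2" using Suc by auto
  show ?case unfolding e1 e2 using Suc l by (simp add: drop_append take_append)
qed

lemma answer_same:
  assumes "length F1 = n" "length F2 = n"
    "sigs (rnn_layers M) (map (rnn_embed M) F1) n = sigs (rnn_layers M) (map (rnn_embed M) F2) n"
  shows "cot_answer M T (F1 @ [x]) = cot_answer M T (F2 @ [x])"
proof -
  let ?s1 = "cot_extend M (F1 @ [x]) T" and ?s2 = "cot_extend M (F2 @ [x]) T"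
  note c = cot_same[OF assms, of x T]
  have t1: "take n ?s1 = F1" and t2: "take n ?s2 = F2" using c by auto
  show ?thesis unfolding cot_answer_def
  proof (rule run_last)
    show "length ?s1 = length ?s2" using c by simp
    show "n < length ?s1" using c by simp
    show "drop n ?s1 = drop n ?s2" using c by simp
    show "sigs (rnn_layers M) (map (rnn_embed M) (take n ?s1)) n = sigs (rnn_layers M) (map (rnn_embed M) (take n ?s2)) n"
      unfolding t1 t2 by (rule assms(3))
  qed
qed

lemma pow_bound:
  fixes n N :: nat
  assumes "real N < real n * log 2 (real n)"
  shows "(2::nat) ^ N < n ^ n"
proof -
  have n: "n > 0"
  proof (rule ccontr)
    assume "\<not> n > 0" then have "n = 0" by simp
    then show False using assms by simp
  qed
  have "real (2 ^ N) = 2 powr real N" by (simp add: powr_realpow)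
  also have "\<dots> < 2 powr (real n * log 2 (real n))" using assms by simp
  also have "\<dots> = (2 powr log 2 (real n)) powr real n" by (simp add: powr_powr mult.commute)
  also have "\<dots> = real n powr real n" using n by simp
  also have "\<dots> = real (n ^ n)" using n by (simp add: powr_realpow)
  finally have "real (2 ^ N) < real (n ^ n)" .
  then show ?thesis by (simp only: of_nat_less_iff)
qed

theorem theoremA4:
  fixes L H m p n T :: nat and P :: "real set" and M :: "'v rnn_model"
  assumes "finite P" and "card P \<le> 2 ^ p"
    and "rnn_wf L H m P M"
    and "real (L * H * m * p) < real n * log 2 (real n)"
  shows "\<not> solves_eva M T n"
proof
  assume sol: "solves_eva M T n"
  let ?D = "{ws. set ws \<subseteq> {1..n} \<and> length ws = n}"
  define \<Phi> where "\<Phi> ws = sigs (rnn_layers M) (map (rnn_embed M) ws) n" for ws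
  let ?V = "{h. set h \<subseteq> P \<and> length h = m}"
  let ?VH = "{hs. set hs \<subseteq> ?V \<and> length hs = H}"
  let ?S = "{ss. set ss \<subseteq> ?VH \<and> length ss = L}"
  have wf1: "length (rnn_layers M) = L"
    and wf2: "\<forall>ly\<in>set (rnn_layers M). length (fst ly) = H \<and> (\<forall>hh\<in>set (fst ly). rnn_head_wf m P hh)"
    using assms(3) by (auto simp: rnn_wf_def)
  have inS: "\<Phi> ws \<in> ?S" for ws
    unfolding \<Phi>_def using sigs_in[OF wf2, of "map (rnn_embed M) ws" n, unfolded wf1] .
  have sub: "\<Phi> ` ?D \<subseteq> ?S" using inS by blast
  have finV: "finite ?V" using assms(1) by (rule finite_lists_length_eq)
  have finVH: "finite ?VH" using finV by (rule finite_lists_length_eq)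
  have finS: "finite ?S" using finVH by (rule finite_lists_length_eq)
  have "card ?S = ((card P ^ m) ^ H) ^ L"
    using assms(1) finV finVH by (simp add: card_lists_length_eq)
  also have "\<dots> \<le> ((((2::nat) ^ p) ^ m) ^ H) ^ L"
    using assms(2) by (intro power_mono) auto
  also have "\<dots> = 2 ^ (L * H * m * p)"
    by (simp add: power_mult[symmetric] mult.commute mult.left_commute)
  also have "\<dots> < n ^ n" using assms(4) by (rule pow_bound)
  also have "n ^ n = card ?D" by (simp add: card_lists_length_eq)
  finally have lt: "card ?S < card ?D" .
  have "card (\<Phi> ` ?D) \<le> card ?S" using sub finS by (rule card_mono[rotated])
  with lt have "card (\<Phi> ` ?D) \<noteq> card ?D" by simp
  then have "\<not> inj_on \<Phi> ?D" using card_image by blast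
  then obtain w1 w2 where w1: "w1 \<in> ?D" and w2: "w2 \<in> ?D" and ne: "w1 \<noteq> w2"
    and eq: "\<Phi> w1 = \<Phi> w2"
    unfolding inj_on_def by blast
  have l1: "length w1 = n" and l2: "length w2 = n" using w1 w2 by auto
  obtain j where j: "j < n" and nj: "w1 ! j \<noteq> w2 ! j"
    using ne l1 l2 nth_equalityI by metis
  define f1 where "f1 i = w1 ! (i - 1)" for i
  define f2 where "f2 i = w2 ! (i - 1)" for i
  have m1: "map f1 [1..<n+1] = w1" by (rule nth_equalityI) (simp_all add: f1_def l1 del: upt_Suc)
  have m2: "map f2 [1..<n+1] = w2" by (rule nth_equalityI) (simp_all add: f2_def l2 del: upt_Suc)
  have r1: "\<forall>i\<in>{1..n}. f1 i \<in> {1..n}"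
  proof
    fix i assume "i \<in> {1..n}"
    then have "w1 ! (i - 1) \<in> set w1" using l1 by auto
    then show "f1 i \<in> {1..n}" using w1 by (auto simp: f1_def)
  qed
  have r2: "\<forall>i\<in>{1..n}. f2 i \<in> {1..n}"
  proof
    fix i assume "i \<in> {1..n}"
    then have "w2 ! (i - 1) \<in> set w2" using l2 by auto
    then show "f2 i \<in> {1..n}" using w2 by (auto simp: f2_def)
  qed
  have x: "Suc j \<in> {1..n}" using j by auto
  have a1: "cot_answer M T (w1 @ [Suc j]) = w1 ! j"
  proof -
    have "cot_answer M T (eva_input n f1 (Suc j)) = f1 (Suc j)"
      using sol r1 x unfolding solves_eva_def by blast
    moreover have "eva_input n f1 (Suc j) = w1 @ [Suc j]" unfolding eva_input_def m1 ..
    moreover have "f1 (Suc j) = w1 ! j" by (simp add: f1_def)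
    ultimately show ?thesis by simp
  qed
  have a2: "cot_answer M T (w2 @ [Suc j]) = w2 ! j"
  proof -
    have "cot_answer M T (eva_input n f2 (Suc j)) = f2 (Suc j)"
      using sol r2 x unfolding solves_eva_def by blast
    moreover have "eva_input n f2 (Suc j) = w2 @ [Suc j]" unfolding eva_input_def m2 ..
    moreover have "f2 (Suc j) = w2 ! j" by (simp add: f2_def)
    ultimately show ?thesis by simp
  qed
  have "cot_answer M T (w1 @ [Suc j]) = cot_answer M T (w2 @ [Suc j])"
    using answer_same[OF l1 l2] eq by (simp add: \<Phi>_def)
  then show False using a1 a2 nj by simp
qed

end
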